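(* Let $(\mathcal A,\mathcal B)$ be a $(\theta,\theta)$ pair. Then $(\mathcal A,\mathcal B)$ is nice if and only if for every two families $X=\{x_u:u<\theta\}$ and $Y=\{y_v:v<\theta\}$, each consisting of pairwise disjoint finite subsets of $\theta$, every $X$-sequence $S$ and every $Y$-sequence $T$, the product partial order $\mathcal Q(X,S)\times\mathcal Q(Y,T)$ has the $\kappa$-chain condition (every antichain has size $<\kappa$).
   Context: Standing assumptions: $\theta$ is a singular cardinal of uncountable cofinality, $\kappa=\mathrm{cf}(\theta)$, and $\langle\theta_\alpha:\alpha<\kappa\rangle$ is a fixed increasing sequence of cardinals converging to $\theta$ with $\theta_0>\kappa$. A $(\theta,\theta)$ pair is $(\mathcal A,\mathcal B)$ with $\mathcal A=\{a_\xi:\xi<\theta\}$, $\mathcal B=\{b_\xi:\xi<\theta\}$ subsets of $\omega$ such that $a_\xi\cap b_\eta$ is finite for all $\xi,\eta<\theta$. For finite $x\subseteq\theta$, $a(x)=\bigcap_{\xi\in x}a_\xi$, $b(x)=\bigcap_{\xi\in x}b_\xi$, with $a(\emptyset)=b(\emptyset)=\omega$. The pair is nice if for every family $\{x_i:i<\theta\}$ of pairwise disjoint finite subsets of $\theta$ there are $i,j<\theta$ with $a(x_i)\cap b(x_j)\ne\emptyset$. Given a family $X=\{x_i:i<\theta\}$ of pairwise disjoint finite subsets of $\theta$, an $X$-sequence is $S=\{S_\alpha:\alpha<\kappa\}$ where the $S_\alpha$ are pairwise disjoint subsets of $\theta$, $|S_\alpha|>\theta_\alpha$, and $a(x_i)\cap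 b(x_j)=\emptyset$ for all $i,j\in S_\alpha$, for every $\alpha<\kappa$. $\mathcal Q(X,S)$ is the set of finite $F\subseteq\kappa$ such that for all distinct $\alpha,\beta\in F$ there exist $i\in S_\alpha$, $j\in S_\beta$ with $a(x_i)\cap b(x_j)\neq\emptyset$ or $b(x_i)\cap a(x_j)\ne\emptyset$; it is ordered by inclusion (two conditions are compatible iff their union is in the poset). *)

theory Defs
  imports Main
begin


definition is_cofinality :: "'b rel \<Rightarrow> 'a rel \<Rightarrow> bool" where
  "is_cofinality k r \<longleftrightarrow>
     (\<exists>C. C \<subseteq> Field r \<and> cofinal C r \<and> (card_of (C), k) \<in> ordIso) \<and>
     (\<forall>C. C \<subseteq> Field r \<and> cofinal C r \<longrightarrow> (k, card_of (C)) \<in> ordLeq)"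

text \<open>a(x) = intersection of a_xi over xi in x; the empty intersection is UNIV = omega.\<close>
definition capA :: "('a \<Rightarrow> nat set) \<Rightarrow> 'a set \<Rightarrow> nat set" where
  "capA a x = (\<Inter>\<xi>\<in>x. a \<xi>)"

definition theta_pair :: "'a set \<Rightarrow> ('a \<Rightarrow> nat set) \<Rightarrow> ('a \<Rightarrow> nat set) \<Rightarrow> bool" where
  "theta_pair \<Theta> a b \<longleftrightarrow> (\<forall>\<xi>\<in>\<Theta>. \<forall>\<eta>\<in>\<Theta>. finite (a \<xi> \<inter> b \<eta>))"

definition disj_fin_family :: "'a set \<Rightarrow> ('a \<Rightarrow> 'a set) \<Rightarrow> bool" where
  "disj_fin_family \<Theta> x \<longleftrightarrow>
     (\<forall>i\<in>\<Theta>. finite (x i) \<and> x i \<subseteq> \<Theta>) \<and>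
     (\<forall>i\<in>\<Theta>. \<forall>j\<in>\<Theta>. i \<noteq> j \<longrightarrow> x i \<inter> x j = {})"

definition nice_pair :: "'a set \<Rightarrow> ('a \<Rightarrow> nat set) \<Rightarrow> ('a \<Rightarrow> nat set) \<Rightarrow> bool" where
  "nice_pair \<Theta> a b \<longleftrightarrow>
     (\<forall>x. disj_fin_family \<Theta> x \<longrightarrow>
        (\<exists>i\<in>\<Theta>. \<exists>j\<in>\<Theta>. capA a (x i) \<inter> capA b (x j) \<noteq> {}))"

text \<open>X-sequence: K is the index set for alpha < kappa, th alpha a set of cardinality theta_alpha.\<close>
definition X_sequence ::
  "'a set \<Rightarrow> 'b set \<Rightarrow> ('b \<Rightarrow> 'a set) \<Rightarrow> ('a \<Rightarrow> nat set) \<Rightarrow> ('a \<Rightarrow> nat set)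
   \<Rightarrow> ('a \<Rightarrow> 'a set) \<Rightarrow> ('b \<Rightarrow> 'a set) \<Rightarrow> bool" where
  "X_sequence \<Theta> K th a b x S \<longleftrightarrow>
     (\<forall>\<alpha>\<in>K. S \<alpha> \<subseteq> \<Theta>) \<and>
     (\<forall>\<alpha>\<in>K. \<forall>\<beta>\<in>K. \<alpha> \<noteq> \<beta> \<longrightarrow> S \<alpha> \<inter> S \<beta> = {}) \<and>
     (\<forall>\<alpha>\<in>K. (card_of (th \<alpha>), card_of (S \<alpha>)) \<in> ordLess) \<and>
     (\<forall>\<alpha>\<in>K. \<forall>i\<in>S \<alpha>. \<forall>j\<in>S \<alpha>. capA a (x i) \<inter> capA b (x j) = {})"

definition Qposet ::
  "'b set \<Rightarrow> ('a \<Rightarrow> nat set) \<Rightarrow> ('a \<Rightarrow> nat set) \<Rightarrow> ('a \<Rightarrow> 'a set) \<Rightarrow> ('b \<Rightarrow> 'a set)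
   \<Rightarrow> 'b set set" where
  "Qposet K a b x S = {F. finite F \<and> F \<subseteq> K \<and>
     (\<forall>\<alpha>\<in>F. \<forall>\<beta>\<in>F. \<alpha> \<noteq> \<beta> \<longrightarrow>
        (\<exists>i\<in>S \<alpha>. \<exists>j\<in>S \<beta>. capA a (x i) \<inter> capA b (x j) \<noteq> {} \<or> capA b (x i) \<inter> capA a (x j) \<noteq> {}))}"

text \<open>Product poset Q1 x Q2 ordered by inclusion coordinatewise; two conditions are compatible
  iff the coordinatewise union is a condition.\<close>
definition prod_compatible :: "'b set set \<Rightarrow> 'b set set \<Rightarrow> ('b set \<times> 'b set) \<Rightarrow> ('b set \<times> 'b set) \<Rightarrow> bool" where
  "prod_compatible Q1 Q2 p q \<longleftrightarrow> fst p \<union> fst q \<in> Q1 \<and> snd p \<union> snd q \<in> Q2"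

definition prod_antichain :: "'b set set \<Rightarrow> 'b set set \<Rightarrow> ('b set \<times> 'b set) set \<Rightarrow> bool" where
  "prod_antichain Q1 Q2 A \<longleftrightarrow> A \<subseteq> Q1 \<times> Q2 \<and>
     (\<forall>p\<in>A. \<forall>q\<in>A. p \<noteq> q \<longrightarrow> \<not> prod_compatible Q1 Q2 p q)"

definition prod_kappa_cc :: "'b set \<Rightarrow> 'b set set \<Rightarrow> 'b set set \<Rightarrow> bool" where
  "prod_kappa_cc K Q1 Q2 \<longleftrightarrow> (\<forall>A. prod_antichain Q1 Q2 A \<longrightarrow> (card_of (A), card_of (K)) \<in> ordLess)"

end

theory Submission
  imports Defs
begin
unbundle cardinal_syntax


lemma under_ordLess:
  assumes "Card_order r" "\<not> finite (Field r)" "b \<in> Field r"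
  shows "|under r b| <o r"
proof -
  have s: "under r b \<subseteq> underS r b \<union> {b}" unfolding under_def underS_def by auto
  have "|underS r b \<union> {b}| <o r"
  proof (rule card_of_Un_ordLess_infinite_Field[OF assms(2,1)])
    show "|underS r b| <o r" using card_of_underS[OF assms(1,3)] .
    have "|{b}| <o natLeq" using finite_iff_ordLess_natLeq[of "{b}"] by simp
    moreover have "natLeq \<le>o |Field r|" using assms(2) infinite_iff_natLeq_ordLeq by blast
    hence "natLeq \<le>o r" using ordLeq_ordIso_trans[OF _ card_of_Field_ordIso[OF assms(1)]] by blast
    ultimately show "|{b}| <o r" by (rule ordLess_ordLeq_trans)
  qed
  with card_of_mono1[OF s] show ?thesis by (rule ordLeq_ordLess_trans)
qed



lemma wo_facts:
  assumes "Card_order r"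
  shows "\<forall>a \<in> Field r. \<forall>b \<in> Field r. (a,b) \<in> r \<or> (b,a) \<in> r"
    and "\<And>a. a \<in> Field r \<Longrightarrow> (a,a) \<in> r"
    and "\<And>a b c. (a,b) \<in> r \<Longrightarrow> (b,c) \<in> r \<Longrightarrow> (a,c) \<in> r"
proof -
  have w: "wo_rel r" using Card_order_wo_rel[OF assms] .
  show "\<forall>a \<in> Field r. \<forall>b \<in> Field r. (a,b) \<in> r \<or> (b,a) \<in> r" using wo_rel.TOTALS[OF w] .
  show "\<And>a. a \<in> Field r \<Longrightarrow> (a,a) \<in> r" using wo_rel.REFL[OF w] unfolding refl_on_def by blast
  show "\<And>a b c. (a,b) \<in> r \<Longrightarrow> (b,c) \<in> r \<Longrightarrow> (a,c) \<in> r" using wo_rel.TRANS[OF w] unfolding trans_def by blast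
qed

lemma underS_iso:
  assumes "Card_order r" "|A| <o r"
  shows "\<exists>m \<in> Field r. |underS r m| =o |A|"
proof -
  have wr: "Well_order r" using assms(1) unfolding card_order_on_def by blast
  obtain m where m: "m \<in> Field r" "|A| =o Restr r (underS r m)"
    using ordLess_iff_ordIso_Restr[OF wr card_of_Well_order] assms(2) by blast
  have F: "Field (Restr r (underS r m)) = underS r m"
    using Field_Restr_ofilter[OF wr wo_rel.underS_ofilter[OF Card_order_wo_rel[OF assms(1)]]] .
  have "|Field |A|| =o |Field (Restr r (underS r m))|" using card_of_cong[OF m(2)] .
  hence "|A| =o |underS r m|" unfolding F Field_card_of .
  thus ?thesis using m(1) ordIso_symmetric by blast
qed

lemma cof_regular:
  fixes r :: "'a rel" and k :: "'b rel" and th :: "'b \<Rightarrow> 'a set"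
  assumes card_r: "Card_order r" and inf_r: "\<not> finite (Field r)"
    and card_k: "Card_order k"
    and cof: "is_cofinality k r"
    and th_below: "\<forall>\<alpha>\<in>Field k. (card_of (th \<alpha>), r) \<in> ordLess"
    and th_incr: "\<forall>\<alpha>\<in>Field k. \<forall>\<beta>\<in>Field k. (\<alpha>, \<beta>) \<in> k \<and> \<alpha> \<noteq> \<beta> \<longrightarrow> (card_of (th \<alpha>), card_of (th \<beta>)) \<in> ordLess"
    and th_conv: "\<forall>C. C \<subseteq> Field r \<and> (card_of (C), r) \<in> ordLess \<longrightarrow> (\<exists>\<alpha>\<in>Field k. (card_of (C), card_of (th \<alpha>)) \<in> ordLeq)"
  shows "regularCard k"
  unfolding regularCard_def
proof (intro allI impI)
  fix D assume D: "D \<subseteq> Field k \<and> cofinal D k"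
  have le: "|D| \<le>o k"
    using ordLeq_ordIso_trans[OF card_of_mono1[of D "Field k"] card_of_Field_ordIso[OF card_k]] D by blast
  show "|D| =o k"
  proof (rule ccontr)
    assume "\<not> |D| =o k"
    hence lt: "|D| <o k" using le ordLeq_iff_ordLess_or_ordIso by blast
    have "\<forall>\<delta>\<in>D. \<exists>m \<in> Field r. |underS r m| =o |th \<delta>|"
      using underS_iso[OF card_r] th_below D by blast
    then obtain M where M: "\<And>\<delta>. \<delta> \<in> D \<Longrightarrow> M \<delta> \<in> Field r \<and> |underS r (M \<delta>)| =o |th \<delta>|"
      by metis
    have Csub: "M ` D \<subseteq> Field r" using M by blast
    have Ccof: "cofinal (M ` D) r" unfolding cofinal_def
    proof
      fix c assume c: "c \<in> Field r"
      have u1: "|under r c| <o r" using under_ordLess[OF card_r inf_r c] .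
      obtain \<alpha> where \<alpha>: "\<alpha> \<in> Field k" "|under r c| \<le>o |th \<alpha>|"
        using th_conv u1 under_Field[of r c] by blast
      obtain \<delta> where \<delta>: "\<delta> \<in> D" "\<alpha> \<noteq> \<delta>" "(\<alpha>,\<delta>) \<in> k" using D \<alpha>(1) unfolding cofinal_def by blast
      have "|th \<alpha>| <o |th \<delta>|" using th_incr \<alpha>(1) \<delta> D by blast
      hence "|under r c| <o |th \<delta>|" using \<alpha>(2) ordLeq_ordLess_trans by blast
      hence lt2: "|under r c| <o |underS r (M \<delta>)|"
        using M[OF \<delta>(1)] ordIso_symmetric ordLess_ordIso_trans by blast
      have nle: "(M \<delta>, c) \<notin> r"
      proof
        assume mc: "(M \<delta>, c) \<in> r"
        have "underS r (M \<delta>) \<subseteq> under r c"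
          unfolding underS_def under_def using wo_facts(3)[OF card_r] mc by blast
        hence "|underS r (M \<delta>)| \<le>o |under r c|" by (rule card_of_mono1)
        thus False using lt2 not_ordLess_ordLeq by blast
      qed
      have mf: "M \<delta> \<in> Field r" using M[OF \<delta>(1)] by blast
      have "c \<noteq> M \<delta>" using nle wo_facts(2)[OF card_r mf] by blast
      moreover have "(c, M \<delta>) \<in> r" using nle wo_facts(1)[OF card_r] c mf by blast
      ultimately show "\<exists>b\<in>M ` D. c \<noteq> b \<and> (c, b) \<in> r" using \<delta>(1) by blast
    qed
    have "k \<le>o |M ` D|" using cof Csub Ccof unfolding is_cofinality_def by blast
    moreover have "|M ` D| <o k" using card_of_image lt by (rule ordLeq_ordLess_trans)
    ultimately show False using not_ordLess_ordLeq by blast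
  qed
qed



lemma max_pairwise:
  "\<exists>P \<subseteq> A. (\<forall>p\<in>P. \<forall>q\<in>P. p \<noteq> q \<longrightarrow> ok p q) \<and>
     (\<forall>x\<in>A - P. \<exists>q\<in>P. \<not> ok x q \<or> \<not> ok q x)"
proof -
  define F where "F = {P. P \<subseteq> A \<and> (\<forall>p\<in>P. \<forall>q\<in>P. p \<noteq> q \<longrightarrow> ok p q)}"
  have "\<forall>C\<in>chains F. \<Union>C \<in> F"
  proof
    fix C assume C: "C \<in> chains F"
    hence Cs: "C \<subseteq> F" and ch: "\<forall>X\<in>C. \<forall>Y\<in>C. X \<subseteq> Y \<or> Y \<subseteq> X"
      unfolding chains_def chain_subset_def by auto
    have s1: "\<Union>C \<subseteq> A" using Cs unfolding F_def by blast
    have s2: "\<forall>p\<in>\<Union>C. \<forall>q\<in>\<Union>C. p \<noteq> q \<longrightarrow> ok p q"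
    proof (intro ballI impI)
      fix p q assume p: "p \<in> \<Union>C" and q: "q \<in> \<Union>C" and pq: "p \<noteq> q"
      then obtain X Y where X: "X \<in> C" "p \<in> X" and Y: "Y \<in> C" "q \<in> Y" by blast
      have XF: "\<forall>p\<in>X. \<forall>q\<in>X. p \<noteq> q \<longrightarrow> ok p q" using Cs X(1) unfolding F_def by blast
      have YF: "\<forall>p\<in>Y. \<forall>q\<in>Y. p \<noteq> q \<longrightarrow> ok p q" using Cs Y(1) unfolding F_def by blast
      from ch X(1) Y(1) have "X \<subseteq> Y \<or> Y \<subseteq> X" by blast
      thus "ok p q"
      proof
        assume "X \<subseteq> Y" thus ?thesis using YF X(2) Y(2) pq by blast
      next
        assume "Y \<subseteq> X" thus ?thesis using XF X(2) Y(2) pq by blast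
      qed
    qed
    show "\<Union>C \<in> F" using s1 s2 unfolding F_def by blast
  qed
  then obtain M where M: "M \<in> F" and mx: "\<forall>X\<in>F. M \<subseteq> X \<longrightarrow> X = M"
    using Zorn_Lemma[of F] by blast
  have MA: "M \<subseteq> A" and Mp: "\<forall>p\<in>M. \<forall>q\<in>M. p \<noteq> q \<longrightarrow> ok p q" using M unfolding F_def by auto
  have "\<forall>x\<in>A - M. \<exists>q\<in>M. \<not> ok x q \<or> \<not> ok q x"
  proof (rule ccontr)
    assume "\<not> (\<forall>x\<in>A - M. \<exists>q\<in>M. \<not> ok x q \<or> \<not> ok q x)"
    then obtain x where x: "x \<in> A" "x \<notin> M" "\<forall>q\<in>M. ok x q \<and> ok q x" by blast
    have "insert x M \<subseteq> A" using MA x(1) by blast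
    moreover have "\<forall>p\<in>insert x M. \<forall>q\<in>insert x M. p \<noteq> q \<longrightarrow> ok p q" using Mp x(3) by blast
    ultimately have "insert x M \<in> F" unfolding F_def by blast
    hence "insert x M = M" using mx by blast
    thus False using x(2) by blast
  qed
  thus ?thesis using MA Mp by blast
qed

lemma fin_less:
  assumes "Card_order k" "\<not> finite (Field k)" "finite A"
  shows "|A| <o k"
proof -
  have "|A| <o natLeq" using finite_iff_ordLess_natLeq assms(3) by blast
  moreover have "natLeq \<le>o |Field k|" using assms(2) infinite_iff_natLeq_ordLeq by blast
  hence "natLeq \<le>o k" using ordLeq_ordIso_trans[OF _ card_of_Field_ordIso[OF assms(1)]] by blast
  ultimately show ?thesis by (rule ordLess_ordLeq_trans)
qed
lemma nle_less:
  assumes "Card_order k" "\<not> k \<le>o |A|"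
  shows "|A| <o k"
proof -
  have w: "Well_order k" using assms(1) unfolding card_order_on_def by blast
  show ?thesis using not_ordLeq_iff_ordLess[OF card_of_Well_order[of A] w, THEN iffD1, OF assms(2)] .
qed



lemma delta_n:
  fixes k :: "'b rel"
  assumes ck: "Card_order k" and ik: "\<not> finite (Field k)" and st: "stable k"
  shows "\<forall>(A :: 'c set) (H :: 'c \<Rightarrow> 'd set). (\<forall>p\<in>A. finite (H p) \<and> card (H p) = n) \<and> inj_on H A \<and> k \<le>o |A|
     \<longrightarrow> (\<exists>P\<subseteq>A. \<exists>R. k \<le>o |P| \<and> (\<forall>p\<in>P. \<forall>q\<in>P. p \<noteq> q \<longrightarrow> H p \<inter> H q = R))"
proof (induction n)
  case 0
  show ?case
  proof (intro allI impI, elim conjE)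
    fix A :: "'c set" and H :: "'c \<Rightarrow> 'd set"
    assume h: "\<forall>p\<in>A. finite (H p) \<and> card (H p) = 0" and inj: "inj_on H A" and kA: "k \<le>o |A|"
    have "H ` A \<subseteq> {{}}" using h by auto
    hence "finite (H ` A)" using finite_subset by blast
    hence "finite A" using finite_imageD inj by blast
    hence "|A| <o k" using fin_less ck ik by blast
    thus "\<exists>P\<subseteq>A. \<exists>R. k \<le>o |P| \<and> (\<forall>p\<in>P. \<forall>q\<in>P. p \<noteq> q \<longrightarrow> H p \<inter> H q = R)"
      using kA not_ordLess_ordLeq by blast
  qed
next
  case (Suc n)
  show ?case
  proof (intro allI impI, elim conjE)
    fix A :: "'c set" and H :: "'c \<Rightarrow> 'd set"
    assume h: "\<forall>p\<in>A. finite (H p) \<and> card (H p) = Suc n" and inj: "inj_on H A" and kA: "k \<le>o |A|"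
    show "\<exists>P\<subseteq>A. \<exists>R. k \<le>o |P| \<and> (\<forall>p\<in>P. \<forall>q\<in>P. p \<noteq> q \<longrightarrow> H p \<inter> H q = R)"
    proof (cases "\<exists>d. k \<le>o |{p\<in>A. d \<in> H p}|")
      case True
      then obtain d where d: "k \<le>o |{p\<in>A. d \<in> H p}|" by blast
      let ?A = "{p\<in>A. d \<in> H p}" and ?H = "\<lambda>p. H p - {d}"
      have h2: "\<forall>p\<in>?A. finite (?H p) \<and> card (?H p) = n" using h by auto
      have inj2: "inj_on ?H ?A"
      proof (rule inj_onI)
        fix p q assume p: "p \<in> ?A" and q: "q \<in> ?A" and e: "?H p = ?H q"
        have "H p = insert d (?H p)" "H q = insert d (?H q)" using p q by auto
        hence "H p = H q" using e by simp
        thus "p = q" using inj p q unfolding inj_on_def by blast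
      qed
      have "\<exists>P\<subseteq>?A. \<exists>R. k \<le>o |P| \<and> (\<forall>p\<in>P. \<forall>q\<in>P. p \<noteq> q \<longrightarrow> ?H p \<inter> ?H q = R)"
        using Suc.IH[rule_format, OF conjI[OF h2 conjI[OF inj2 d]]] .
      then obtain P R where P: "P \<subseteq> ?A" "k \<le>o |P|" "\<forall>p\<in>P. \<forall>q\<in>P. p \<noteq> q \<longrightarrow> ?H p \<inter> ?H q = R"
        by blast
      have "\<forall>p\<in>P. \<forall>q\<in>P. p \<noteq> q \<longrightarrow> H p \<inter> H q = insert d R"
      proof (intro ballI impI)
        fix p q assume p: "p \<in> P" and q: "q \<in> P" and pq: "p \<noteq> q"
        have "?H p \<inter> ?H q = R" using P(3) p q pq by blast
        moreover have "d \<in> H p" "d \<in> H q" using P(1) p q by auto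
        ultimately show "H p \<inter> H q = insert d R" by blast
      qed
      thus ?thesis using P(1,2) by blast
    next
      case False
      have wk: "Well_order k" using ck unfolding card_order_on_def by blast
      have small: "\<And>d. |{p\<in>A. d \<in> H p}| <o k"
      proof -
        fix d
        have "\<not> k \<le>o |{p\<in>A. d \<in> H p}|" using False by blast
        thus "|{p\<in>A. d \<in> H p}| <o k" by (rule nle_less[OF ck])
      qed
      obtain P where P: "P \<subseteq> A" "\<forall>p\<in>P. \<forall>q\<in>P. p \<noteq> q \<longrightarrow> H p \<inter> H q = {}"
        "\<forall>x\<in>A - P. \<exists>q\<in>P. \<not> H x \<inter> H q = {} \<or> \<not> H q \<inter> H x = {}"
        using max_pairwise[of A "\<lambda>p q. H p \<inter> H q = {}"] by blast
      have "k \<le>o |P|"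
      proof (rule ccontr)
        assume "\<not> k \<le>o |P|"
        hence Pl: "|P| <o k" by (rule nle_less[OF ck])
        let ?U = "\<Union>p\<in>P. H p"
        have hp: "\<And>p. p \<in> P \<Longrightarrow> |H p| <o k" using fin_less[OF ck ik] h P(1) by blast
        have Ul: "|?U| <o k" by (rule stable_UNION[OF st Pl hp])
        let ?B = "\<Union>d\<in>?U. {p\<in>A. d \<in> H p}"
        have Bl: "|?B| <o k" by (rule stable_UNION[OF st Ul small])
        have "\<not> A \<subseteq> ?B"
        proof
          assume "A \<subseteq> ?B"
          hence "|A| \<le>o |?B|" by (rule card_of_mono1)
          hence "k \<le>o |?B|" using kA ordLeq_transitive by blast
          thus False using Bl not_ordLess_ordLeq by blast
        qed
        then obtain x where x: "x \<in> A" "x \<notin> ?B" by blast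
        have "x \<notin> P"
        proof
          assume "x \<in> P"
          have "card (H x) = Suc n" using h x(1) by blast
          hence "H x \<noteq> {}" by auto
          then obtain d where "d \<in> H x" by blast
          thus False using x \<open>x \<in> P\<close> by blast
        qed
        moreover have "\<forall>q\<in>P. H x \<inter> H q = {} \<and> H q \<inter> H x = {}"
          using x by blast
        ultimately show False using P(3) x(1) by blast
      qed
      thus ?thesis using P(1,2) by blast
    qed
  qed
qed

lemma delta_system:
  fixes k :: "'b rel" and A :: "'c set" and H :: "'c \<Rightarrow> 'd set"
  assumes ck: "Card_order k" and ik: "\<not> finite (Field k)" and st: "stable k"
    and unc: "natLeq <o k"
    and fin: "\<forall>p\<in>A. finite (H p)" and inj: "inj_on H A" and kA: "k \<le>o |A|"
  shows "\<exists>P\<subseteq>A. \<exists>R. k \<le>o |P| \<and> (\<forall>p\<in>P. \<forall>q\<in>P. p \<noteq> q \<longrightarrow> H p \<inter> H q = R)"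
proof -
  have wk: "Well_order k" using ck unfolding card_order_on_def by blast
  have "\<exists>n. k \<le>o |{p\<in>A. card (H p) = n}|"
  proof (rule ccontr)
    assume nex: "\<not> ?thesis"
    have sm: "\<And>n. |{p\<in>A. card (H p) = n}| <o k"
    proof -
      fix n
      have "\<not> k \<le>o |{p\<in>A. card (H p) = n}|" using nex by blast
      thus "|{p\<in>A. card (H p) = n}| <o k" by (rule nle_less[OF ck])
    qed
    have "|UNIV :: nat set| <o k" using ordIso_ordLess_trans[OF card_of_nat unc] .
    hence u: "|\<Union>n\<in>(UNIV::nat set). {p\<in>A. card (H p) = n}| <o k"
      by (rule stable_UNION[OF st _ sm])
    have e: "(\<Union>n\<in>(UNIV::nat set). {p\<in>A. card (H p) = n}) = A" by blast
    have "|A| <o k" using u unfolding e .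
    thus False using kA not_ordLess_ordLeq by blast
  qed
  then obtain n where n: "k \<le>o |{p\<in>A. card (H p) = n}|" by blast
  have "\<exists>P\<subseteq>{p\<in>A. card (H p) = n}. \<exists>R. k \<le>o |P| \<and> (\<forall>p\<in>P. \<forall>q\<in>P. p \<noteq> q \<longrightarrow> H p \<inter> H q = R)"
  proof -
    have f1: "\<forall>p\<in>{p\<in>A. card (H p) = n}. finite (H p) \<and> card (H p) = n" using fin by blast
    have f2: "inj_on H {p\<in>A. card (H p) = n}" by (rule inj_on_subset[OF inj]) blast
    show ?thesis using delta_n[OF ck ik st, of n, rule_format, OF conjI[OF f1 conjI[OF f2 n]]] .
  qed
  then obtain P R where "P \<subseteq> {p\<in>A. card (H p) = n}" "k \<le>o |P|" "\<forall>p\<in>P. \<forall>q\<in>P. p \<noteq> q \<longrightarrow> H p \<inter> H q = R" by blast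
  thus ?thesis by blast
qed



lemma backward:
  fixes r :: "'a rel" and k :: "'b rel" and th :: "'b \<Rightarrow> 'a set" and a b :: "'a \<Rightarrow> nat set"
  assumes card_r: "Card_order r" and inf_r: "\<not> finite (Field r)"
    and card_k: "Card_order k"
    and singular: "k <o r"
    and th_below: "\<forall>\<alpha>\<in>Field k. |th \<alpha>| <o r"
    and rhs: "\<forall>x y S T. disj_fin_family (Field r) x \<and> disj_fin_family (Field r) y \<and>
       X_sequence (Field r) (Field k) th a b x S \<and> X_sequence (Field r) (Field k) th a b y T
       \<longrightarrow> prod_kappa_cc (Field k) (Qposet (Field k) a b x S) (Qposet (Field k) a b y T)"
  shows "nice_pair (Field r) a b"
  unfolding nice_pair_def
proof (intro allI impI)
  fix z assume dz: "disj_fin_family (Field r) z"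
  show "\<exists>i\<in>Field r. \<exists>j\<in>Field r. capA a (z i) \<inter> capA b (z j) \<noteq> {}"
  proof (rule ccontr)
    assume "\<not> ?thesis"
    hence E: "\<And>i j. i \<in> Field r \<Longrightarrow> j \<in> Field r \<Longrightarrow> capA a (z i) \<inter> capA b (z j) = {}" by blast
    have "|Field k| \<le>o |Field r|"
    proof -
      have "|Field k| =o k" using card_of_Field_ordIso[OF card_k] .
      moreover have "k \<le>o r" using ordLess_imp_ordLeq[OF singular] .
      moreover have "r =o |Field r|" using ordIso_symmetric[OF card_of_Field_ordIso[OF card_r]] .
      ultimately show ?thesis using ordIso_ordLeq_trans ordLeq_ordIso_trans by blast
    qed
    then obtain e where e: "inj_on e (Field k)" "e ` Field k \<subseteq> Field r"
      using card_of_ordLeq[of "Field k" "Field r"] by blast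
    have "|Field r \<times> Field r| =o |Field r|" using card_of_Times_same_infinite[OF inf_r] .
    then obtain \<pi> where pi: "bij_betw \<pi> (Field r \<times> Field r) (Field r)"
      using card_of_ordIso by blast
    define S where "S = (\<lambda>\<alpha>. (\<lambda>t. \<pi> (e \<alpha>, t)) ` Field r)"
    have pinj: "\<And>u v. u \<in> Field r \<times> Field r \<Longrightarrow> v \<in> Field r \<times> Field r \<Longrightarrow> \<pi> u = \<pi> v \<Longrightarrow> u = v"
      using pi unfolding bij_betw_def inj_on_def by blast
    have pimg: "\<And>u. u \<in> Field r \<times> Field r \<Longrightarrow> \<pi> u \<in> Field r"
      using pi unfolding bij_betw_def by blast
    have Ssub: "\<forall>\<alpha>\<in>Field k. S \<alpha> \<subseteq> Field r"
      unfolding S_def using e(2) pimg by blast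
    have Sdisj: "\<forall>\<alpha>\<in>Field k. \<forall>\<beta>\<in>Field k. \<alpha> \<noteq> \<beta> \<longrightarrow> S \<alpha> \<inter> S \<beta> = {}"
    proof (intro ballI impI)
      fix \<alpha> \<beta> assume ab: "\<alpha> \<in> Field k" "\<beta> \<in> Field k" "\<alpha> \<noteq> \<beta>"
      have ne: "e \<alpha> \<noteq> e \<beta>" using e(1) ab unfolding inj_on_def by blast
      show "S \<alpha> \<inter> S \<beta> = {}"
      proof (rule ccontr)
        assume "S \<alpha> \<inter> S \<beta> \<noteq> {}"
        then obtain t s where ts: "t \<in> Field r" "s \<in> Field r" "\<pi> (e \<alpha>, t) = \<pi> (e \<beta>, s)"
          unfolding S_def by blast
        have "(e \<alpha>, t) = (e \<beta>, s)" using pinj[OF _ _ ts(3)] ts(1,2) e(2) ab(1,2) by blast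
        thus False using ne by simp
      qed
    qed
    have Scard: "\<forall>\<alpha>\<in>Field k. |th \<alpha>| <o |S \<alpha>|"
    proof
      fix \<alpha> assume al: "\<alpha> \<in> Field k"
      have "bij_betw (\<lambda>t. \<pi> (e \<alpha>, t)) (Field r) (S \<alpha>)"
        unfolding bij_betw_def S_def inj_on_def using pinj e(2) al by blast
      hence "|Field r| =o |S \<alpha>|" using card_of_ordIso by blast
      hence "r =o |S \<alpha>|" using ordIso_transitive[OF ordIso_symmetric[OF card_of_Field_ordIso[OF card_r]]] by blast
      thus "|th \<alpha>| <o |S \<alpha>|" using th_below al ordLess_ordIso_trans by blast
    qed
    have XS: "X_sequence (Field r) (Field k) th a b z S"
      unfolding X_sequence_def using Ssub Sdisj Scard E by blast
    have cc: "prod_kappa_cc (Field k) (Qposet (Field k) a b z S) (Qposet (Field k) a b z S)"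
      using rhs dz XS by blast
    define Q where "Q = Qposet (Field k) a b z S"
    define Ac where "Ac = (\<lambda>\<alpha>. ({\<alpha>}, {\<alpha>})) ` Field k"
    have sing: "\<And>\<alpha>. \<alpha> \<in> Field k \<Longrightarrow> {\<alpha>} \<in> Q" unfolding Q_def Qposet_def by auto
    have pairn: "\<And>\<alpha> \<beta>. \<alpha> \<in> Field k \<Longrightarrow> \<beta> \<in> Field k \<Longrightarrow> \<alpha> \<noteq> \<beta> \<Longrightarrow> {\<alpha>} \<union> {\<beta>} \<notin> Q"
    proof
      fix \<alpha> \<beta> assume ab: "\<alpha> \<in> Field k" "\<beta> \<in> Field k" "\<alpha> \<noteq> \<beta>" and inQ: "{\<alpha>} \<union> {\<beta>} \<in> Q"
      hence "\<exists>i\<in>S \<alpha>. \<exists>j\<in>S \<beta>. capA a (z i) \<inter> capA b (z j) \<noteq> {} \<or> capA b (z i) \<inter> capA a (z j) \<noteq> {}"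
        unfolding Q_def Qposet_def by blast
      then obtain i j where ij: "i \<in> S \<alpha>" "j \<in> S \<beta>" "capA a (z i) \<inter> capA b (z j) \<noteq> {} \<or> capA b (z i) \<inter> capA a (z j) \<noteq> {}"
        by blast
      have "i \<in> Field r" "j \<in> Field r" using ij(1,2) Ssub ab(1,2) by blast+
      thus False using ij(3) E by blast
    qed
    have anti: "prod_antichain Q Q Ac"
      unfolding prod_antichain_def prod_compatible_def Ac_def
      using sing pairn by auto
    hence "|Ac| <o |Field k|" using cc unfolding prod_kappa_cc_def Q_def by blast
    moreover have "|Ac| =o |Field k|"
    proof -
      have "bij_betw (\<lambda>\<alpha>. ({\<alpha>}, {\<alpha>})) (Field k) Ac" unfolding Ac_def bij_betw_def inj_on_def by auto
      hence "|Field k| =o |Ac|" using card_of_ordIso by blast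
      thus ?thesis using ordIso_symmetric by blast
    qed
    ultimately show False using not_ordLess_ordIso by blast
  qed
qed



lemma unlinked_pair:
  assumes F: "F \<in> Qposet K a b x S" and G: "G \<in> Qposet K a b x S" and FG: "F \<union> G \<notin> Qposet K a b x S"
  shows "\<exists>\<alpha>\<in>F - G. \<exists>\<beta>\<in>G - F. \<forall>i\<in>S \<alpha>. \<forall>j\<in>S \<beta>. capA a (x i) \<inter> capA b (x j) = {}"
proof -
  let ?L = "\<lambda>\<alpha> \<beta>. \<exists>i\<in>S \<alpha>. \<exists>j\<in>S \<beta>. capA a (x i) \<inter> capA b (x j) \<noteq> {} \<or> capA b (x i) \<inter> capA a (x j) \<noteq> {}"
  have Fp: "finite F" "F \<subseteq> K" "\<forall>\<alpha>\<in>F. \<forall>\<beta>\<in>F. \<alpha> \<noteq> \<beta> \<longrightarrow> ?L \<alpha> \<beta>" using F unfolding Qposet_def by auto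
  have Gp: "finite G" "G \<subseteq> K" "\<forall>\<alpha>\<in>G. \<forall>\<beta>\<in>G. \<alpha> \<noteq> \<beta> \<longrightarrow> ?L \<alpha> \<beta>" using G unfolding Qposet_def by auto
  have "\<not> (\<forall>\<alpha>\<in>F \<union> G. \<forall>\<beta>\<in>F \<union> G. \<alpha> \<noteq> \<beta> \<longrightarrow> ?L \<alpha> \<beta>)"
  proof
    assume "\<forall>\<alpha>\<in>F \<union> G. \<forall>\<beta>\<in>F \<union> G. \<alpha> \<noteq> \<beta> \<longrightarrow> ?L \<alpha> \<beta>"
    hence "F \<union> G \<in> Qposet K a b x S" using Fp(1,2) Gp(1,2) unfolding Qposet_def by blast
    thus False using FG by blast
  qed
  then obtain \<alpha> \<beta> where ab: "\<alpha> \<in> F \<union> G" "\<beta> \<in> F \<union> G" "\<alpha> \<noteq> \<beta>" "\<not> ?L \<alpha> \<beta>" by blast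
  have nF: "\<not> (\<alpha> \<in> F \<and> \<beta> \<in> F)" using Fp(3) ab(3,4) by blast
  have nG: "\<not> (\<alpha> \<in> G \<and> \<beta> \<in> G)" using Gp(3) ab(3,4) by blast
  show ?thesis
  proof (cases "\<alpha> \<in> F")
    case True
    hence "\<alpha> \<in> F - G" "\<beta> \<in> G - F" using nF nG ab(1,2) by blast+
    moreover have "\<forall>i\<in>S \<alpha>. \<forall>j\<in>S \<beta>. capA a (x i) \<inter> capA b (x j) = {}" using ab(4) by blast
    ultimately show ?thesis by blast
  next
    case False
    hence "\<beta> \<in> F - G" "\<alpha> \<in> G - F" using nF nG ab(1,2) by blast+
    moreover have "\<forall>i\<in>S \<beta>. \<forall>j\<in>S \<alpha>. capA a (x i) \<inter> capA b (x j) = {}" using ab(4) by blast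
    ultimately show ?thesis by blast
  qed
qed

lemma capA_anti: "B \<subseteq> C \<Longrightarrow> capA a C \<subseteq> capA a B"
  unfolding capA_def by blast

lemma capA_empty: "capA a {} = UNIV"
  unfolding capA_def by simp

lemma fin_le_inf:
  assumes "finite A" "\<not> finite B"
  shows "|A| \<le>o |B|"
proof -
  have "|A| <o natLeq" using finite_iff_ordLess_natLeq assms(1) by blast
  moreover have "natLeq \<le>o |B|" using assms(2) infinite_iff_natLeq_ordLeq by blast
  ultimately show ?thesis by (rule ordLess_imp_ordLeq[OF ordLess_ordLeq_trans])
qed

lemma pick_inj_card:
  assumes "\<And>p. p \<in> B \<Longrightarrow> D p \<inter> U \<noteq> {}"
    and "\<And>p q. p \<in> B \<Longrightarrow> q \<in> B \<Longrightarrow> p \<noteq> q \<Longrightarrow> D p \<inter> D q = {}"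
  shows "|B| \<le>o |U|"
proof -
  define f where "f = (\<lambda>p. SOME t. t \<in> D p \<inter> U)"
  have fp: "f p \<in> D p \<inter> U" if "p \<in> B" for p
  proof -
    have "\<exists>t. t \<in> D p \<inter> U" using assms(1)[OF that] by blast
    thus ?thesis unfolding f_def by (rule someI_ex)
  qed
  have "inj_on f B"
  proof (rule inj_onI)
    fix p q assume pq: "p \<in> B" "q \<in> B" "f p = f q"
    show "p = q"
    proof (rule ccontr)
      assume "p \<noteq> q"
      hence e1: "D p \<inter> D q = {}" by (rule assms(2)[OF pq(1,2)])
      have e2: "f p \<in> D p" using fp[OF pq(1)] by simp
      have e3: "f q \<in> D q" using fp[OF pq(2)] by simp
      have "f p \<in> D p \<inter> D q" using e2 e3 pq(3) by simp
      thus False using e1 by simp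
    qed
  qed
  moreover have "f ` B \<subseteq> U" using fp by blast
  ultimately have "\<exists>f. inj_on f B \<and> f ` B \<subseteq> U" by blast
  thus ?thesis by (rule card_of_ordLeq[of B U, THEN iffD1])
qed



lemma forward:
  fixes r :: "'a rel" and k :: "'b rel" and th :: "'b \<Rightarrow> 'a set" and a b :: "'a \<Rightarrow> nat set"
    and x y :: "'a \<Rightarrow> 'a set" and S T :: "'b \<Rightarrow> 'a set" and A :: "('b set \<times> 'b set) set"
  assumes card_r: "Card_order r" and inf_r: "\<not> finite (Field r)"
    and card_k: "Card_order k" and ik: "\<not> finite (Field k)" and st: "stable k"
    and unc: "natLeq <o k"
    and th_incr: "\<forall>\<alpha>\<in>Field k. \<forall>\<beta>\<in>Field k. (\<alpha>, \<beta>) \<in> k \<and> \<alpha> \<noteq> \<beta> \<longrightarrow> card_of (th \<alpha>) <o card_of (th \<beta>)"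
    and th_conv: "\<forall>C. C \<subseteq> Field r \<and> card_of C <o r \<longrightarrow> (\<exists>\<alpha>\<in>Field k. card_of C \<le>o card_of (th \<alpha>))"
    and nice: "nice_pair (Field r) a b"
    and dx: "disj_fin_family (Field r) x" and dy: "disj_fin_family (Field r) y"
    and XS: "X_sequence (Field r) (Field k) th a b x S"
    and YT: "X_sequence (Field r) (Field k) th a b y T"
    and anti: "prod_antichain (Qposet (Field k) a b x S) (Qposet (Field k) a b y T) A"
  shows "|A| <o |Field k|"
proof (rule ccontr)
  define Q1 where "Q1 = Qposet (Field k) a b x S"
  define Q2 where "Q2 = Qposet (Field k) a b y T"
  assume "\<not> |A| <o |Field k|"
  hence "|Field k| \<le>o |A|"
    using not_ordLess_iff_ordLeq[OF card_of_Well_order card_of_Well_order] by blast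
  hence kA: "k \<le>o |A|"
    using ordIso_ordLeq_trans[OF ordIso_symmetric[OF card_of_Field_ordIso[OF card_k]]] by blast
  have AQ: "A \<subseteq> Q1 \<times> Q2" using anti unfolding prod_antichain_def Q1_def Q2_def by blast
  have Ainc: "\<And>p q. p \<in> A \<Longrightarrow> q \<in> A \<Longrightarrow> p \<noteq> q \<Longrightarrow> fst p \<union> fst q \<notin> Q1 \<or> snd p \<union> snd q \<notin> Q2"
    using anti unfolding prod_antichain_def prod_compatible_def Q1_def Q2_def by blast
  have Q1p: "\<And>F. F \<in> Q1 \<Longrightarrow> finite F \<and> F \<subseteq> Field k" unfolding Q1_def Qposet_def by blast
  have Q2p: "\<And>F. F \<in> Q2 \<Longrightarrow> finite F \<and> F \<subseteq> Field k" unfolding Q2_def Qposet_def by blast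
  define H where "H = (\<lambda>p :: 'b set \<times> 'b set. (Inl ` fst p \<union> Inr ` snd p :: ('b + 'b) set))"
  have Hl: "\<And>p. {\<alpha>. Inl \<alpha> \<in> H p} = fst p" unfolding H_def by auto
  have Hr: "\<And>p. {\<alpha>. Inr \<alpha> \<in> H p} = snd p" unfolding H_def by auto
  have Hfin: "\<forall>p\<in>A. finite (H p)"
  proof
    fix p assume "p \<in> A"
    hence "fst p \<in> Q1" "snd p \<in> Q2" using AQ by auto
    hence "finite (fst p)" "finite (snd p)" using Q1p Q2p by blast+
    thus "finite (H p)" unfolding H_def by simp
  qed
  have Hinj: "inj_on H A"
  proof (rule inj_onI)
    fix p q assume "p \<in> A" "q \<in> A" "H p = H q"
    hence "fst p = fst q" "snd p = snd q" using Hl[of p] Hl[of q] Hr[of p] Hr[of q] by auto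
    thus "p = q" by (simp add: prod_eq_iff)
  qed
  obtain P R where P: "P \<subseteq> A" "k \<le>o |P|" "\<forall>p\<in>P. \<forall>q\<in>P. p \<noteq> q \<longrightarrow> H p \<inter> H q = R"
    using delta_system[OF card_k ik st unc Hfin Hinj kA] by blast
  define R1 where "R1 = {\<alpha>. Inl \<alpha> \<in> R}"
  define R2 where "R2 = {\<alpha>. Inr \<alpha> \<in> R}"
  have PR1: "\<And>p q. p \<in> P \<Longrightarrow> q \<in> P \<Longrightarrow> p \<noteq> q \<Longrightarrow> fst p \<inter> fst q = R1"
  proof -
    fix p q assume "p \<in> P" "q \<in> P" "p \<noteq> q"
    hence "H p \<inter> H q = R" using P(3) by blast
    hence "{\<alpha>. Inl \<alpha> \<in> H p \<inter> H q} = R1" unfolding R1_def by simp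
    moreover have "{\<alpha>. Inl \<alpha> \<in> H p \<inter> H q} = fst p \<inter> fst q" using Hl[of p] Hl[of q] by auto
    ultimately show "fst p \<inter> fst q = R1" by simp
  qed
  have PR2: "\<And>p q. p \<in> P \<Longrightarrow> q \<in> P \<Longrightarrow> p \<noteq> q \<Longrightarrow> snd p \<inter> snd q = R2"
  proof -
    fix p q assume "p \<in> P" "q \<in> P" "p \<noteq> q"
    hence "H p \<inter> H q = R" using P(3) by blast
    hence "{\<alpha>. Inr \<alpha> \<in> H p \<inter> H q} = R2" unfolding R2_def by simp
    moreover have "{\<alpha>. Inr \<alpha> \<in> H p \<inter> H q} = snd p \<inter> snd q" using Hr[of p] Hr[of q] by auto
    ultimately show "snd p \<inter> snd q = R2" by simp
  qed
  define E1 where "E1 = (\<lambda>p :: 'b set \<times> 'b set. fst p - R1)"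
  define E2 where "E2 = (\<lambda>p :: 'b set \<times> 'b set. snd p - R2)"
  have E1K: "\<And>p. p \<in> P \<Longrightarrow> E1 p \<subseteq> Field k \<and> finite (E1 p)"
  proof -
    fix p assume "p \<in> P"
    hence "fst p \<in> Q1" using P(1) AQ by auto
    thus "E1 p \<subseteq> Field k \<and> finite (E1 p)" using Q1p unfolding E1_def by blast
  qed
  have E2K: "\<And>p. p \<in> P \<Longrightarrow> E2 p \<subseteq> Field k \<and> finite (E2 p)"
  proof -
    fix p assume "p \<in> P"
    hence "snd p \<in> Q2" using P(1) AQ by auto
    thus "E2 p \<subseteq> Field k \<and> finite (E2 p)" using Q2p unfolding E2_def by blast
  qed
  have E1d: "\<And>p q. p \<in> P \<Longrightarrow> q \<in> P \<Longrightarrow> p \<noteq> q \<Longrightarrow> E1 p \<inter> E1 q = {}"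
    using PR1 unfolding E1_def by blast
  have E2d: "\<And>p q. p \<in> P \<Longrightarrow> q \<in> P \<Longrightarrow> p \<noteq> q \<Longrightarrow> E2 p \<inter> E2 q = {}"
    using PR2 unfolding E2_def by blast
  have F2: "\<And>p q. p \<in> P \<Longrightarrow> q \<in> P \<Longrightarrow> p \<noteq> q \<Longrightarrow>
     (\<exists>\<alpha>\<in>E1 p. \<exists>\<beta>\<in>E1 q. \<forall>i\<in>S \<alpha>. \<forall>j\<in>S \<beta>. capA a (x i) \<inter> capA b (x j) = {}) \<or>
     (\<exists>\<alpha>\<in>E2 p. \<exists>\<beta>\<in>E2 q. \<forall>i\<in>T \<alpha>. \<forall>j\<in>T \<beta>. capA a (y i) \<inter> capA b (y j) = {})"
  proof -
    fix p q assume pq: "p \<in> P" "q \<in> P" "p \<noteq> q"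
    have pA: "p \<in> A" "q \<in> A" using pq P(1) by blast+
    have m: "fst p \<in> Q1" "fst q \<in> Q1" "snd p \<in> Q2" "snd q \<in> Q2" using pA AQ by auto
    from Ainc[OF pA pq(3)]
    show "?thesis p q"
    proof
      assume "fst p \<union> fst q \<notin> Q1"
      then obtain \<alpha> \<beta> where ab: "\<alpha> \<in> fst p - fst q" "\<beta> \<in> fst q - fst p"
          "\<forall>i\<in>S \<alpha>. \<forall>j\<in>S \<beta>. capA a (x i) \<inter> capA b (x j) = {}"
        using unlinked_pair[of "fst p" "Field k" a b x S "fst q"] m(1,2) unfolding Q1_def by blast
      have "\<alpha> \<in> E1 p" using ab(1) PR1[OF pq] unfolding E1_def by blast
      moreover have "\<beta> \<in> E1 q" using ab(2) PR1[OF pq] unfolding E1_def by blast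
      ultimately show ?thesis using ab(3) by blast
    next
      assume "snd p \<union> snd q \<notin> Q2"
      then obtain \<alpha> \<beta> where ab: "\<alpha> \<in> snd p - snd q" "\<beta> \<in> snd q - snd p"
          "\<forall>i\<in>T \<alpha>. \<forall>j\<in>T \<beta>. capA a (y i) \<inter> capA b (y j) = {}"
        using unlinked_pair[of "snd p" "Field k" a b y T "snd q"] m(3,4) unfolding Q2_def by blast
      have "\<alpha> \<in> E2 p" using ab(1) PR2[OF pq] unfolding E2_def by blast
      moreover have "\<beta> \<in> E2 q" using ab(2) PR2[OF pq] unfolding E2_def by blast
      ultimately show ?thesis using ab(3) by blast
    qed
  qed
  have Pinf: "\<not> finite P"
  proof
    assume "finite P"
    hence "|P| <o k" by (rule fin_less[OF card_k ik])
    thus False using P(2) not_ordLess_ordLeq by blast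
  qed
  have F3: "\<And>p. p \<in> P \<Longrightarrow> E1 p \<noteq> {} \<or> E2 p \<noteq> {}"
  proof -
    fix p assume p: "p \<in> P"
    have "\<not> P \<subseteq> {p}" using Pinf finite_subset by blast
    then obtain q where q: "q \<in> P" "q \<noteq> p" by blast
    from F2[OF p q(1) q(2)[symmetric]]
    show "E1 p \<noteq> {} \<or> E2 p \<noteq> {}" by blast
  qed
  have XS1: "\<forall>\<alpha>\<in>Field k. S \<alpha> \<subseteq> Field r" and XS3: "\<forall>\<alpha>\<in>Field k. |th \<alpha>| <o |S \<alpha>|"
    and XS4: "\<forall>\<alpha>\<in>Field k. \<forall>i\<in>S \<alpha>. \<forall>j\<in>S \<alpha>. capA a (x i) \<inter> capA b (x j) = {}"
    using XS unfolding X_sequence_def by auto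
  have YT1: "\<forall>\<alpha>\<in>Field k. T \<alpha> \<subseteq> Field r" and YT3: "\<forall>\<alpha>\<in>Field k. |th \<alpha>| <o |T \<alpha>|"
    and YT4: "\<forall>\<alpha>\<in>Field k. \<forall>i\<in>T \<alpha>. \<forall>j\<in>T \<alpha>. capA a (y i) \<inter> capA b (y j) = {}"
    using YT unfolding X_sequence_def by auto
  have dx1: "\<forall>i\<in>Field r. finite (x i) \<and> x i \<subseteq> Field r"
    and dx2: "\<forall>i\<in>Field r. \<forall>j\<in>Field r. i \<noteq> j \<longrightarrow> x i \<inter> x j = {}"
    using dx unfolding disj_fin_family_def by auto
  have dy1: "\<forall>i\<in>Field r. finite (y i) \<and> y i \<subseteq> Field r"
    and dy2: "\<forall>i\<in>Field r. \<forall>j\<in>Field r. i \<noteq> j \<longrightarrow> y i \<inter> y j = {}"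
    using dy unfolding disj_fin_family_def by auto
  define Tup where "Tup = {u :: ('b set \<times> 'b set) \<times> ('b \<Rightarrow> 'a) \<times> ('b \<Rightarrow> 'a).
      fst u \<in> P \<and> (\<forall>\<alpha>\<in>E1 (fst u). fst (snd u) \<alpha> \<in> S \<alpha>) \<and> (\<forall>\<beta>\<in>E2 (fst u). snd (snd u) \<beta> \<in> T \<beta>)}"
  define Z where "Z = (\<lambda>u :: ('b set \<times> 'b set) \<times> ('b \<Rightarrow> 'a) \<times> ('b \<Rightarrow> 'a).
      (\<Union>\<alpha>\<in>E1 (fst u). x (fst (snd u) \<alpha>)) \<union> (\<Union>\<beta>\<in>E2 (fst u). y (snd (snd u) \<beta>)))"
  have Zx: "\<And>u \<alpha>. \<alpha> \<in> E1 (fst u) \<Longrightarrow> x (fst (snd u) \<alpha>) \<subseteq> Z u" unfolding Z_def by blast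
  have Zy: "\<And>u \<beta>. \<beta> \<in> E2 (fst u) \<Longrightarrow> y (snd (snd u) \<beta>) \<subseteq> Z u" unfolding Z_def by blast
  have Tx: "\<And>u \<alpha>. u \<in> Tup \<Longrightarrow> \<alpha> \<in> E1 (fst u) \<Longrightarrow> \<alpha> \<in> Field k \<and> fst (snd u) \<alpha> \<in> S \<alpha> \<and> fst (snd u) \<alpha> \<in> Field r"
  proof -
    fix u \<alpha> assume u: "u \<in> Tup" and al: "\<alpha> \<in> E1 (fst u)"
    have "fst u \<in> P" using u unfolding Tup_def by blast
    hence ak: "\<alpha> \<in> Field k" using E1K al by blast
    have "fst (snd u) \<alpha> \<in> S \<alpha>" using u al unfolding Tup_def by blast
    thus "\<alpha> \<in> Field k \<and> fst (snd u) \<alpha> \<in> S \<alpha> \<and> fst (snd u) \<alpha> \<in> Field r" using ak XS1 by blast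
  qed
  have Ty: "\<And>u \<beta>. u \<in> Tup \<Longrightarrow> \<beta> \<in> E2 (fst u) \<Longrightarrow> \<beta> \<in> Field k \<and> snd (snd u) \<beta> \<in> T \<beta> \<and> snd (snd u) \<beta> \<in> Field r"
  proof -
    fix u \<beta> assume u: "u \<in> Tup" and al: "\<beta> \<in> E2 (fst u)"
    have "fst u \<in> P" using u unfolding Tup_def by blast
    hence ak: "\<beta> \<in> Field k" using E2K al by blast
    have "snd (snd u) \<beta> \<in> T \<beta>" using u al unfolding Tup_def by blast
    thus "\<beta> \<in> Field k \<and> snd (snd u) \<beta> \<in> T \<beta> \<and> snd (snd u) \<beta> \<in> Field r" using ak YT1 by blast
  qed
  have Zsub: "\<And>u. u \<in> Tup \<Longrightarrow> finite (Z u) \<and> Z u \<subseteq> Field r"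
  proof -
    fix u assume u: "u \<in> Tup"
    have fP: "fst u \<in> P" using u unfolding Tup_def by blast
    have f1: "finite (E1 (fst u))" "finite (E2 (fst u))" using E1K[OF fP] E2K[OF fP] by blast+
    have a1: "\<forall>\<alpha>\<in>E1 (fst u). finite (x (fst (snd u) \<alpha>)) \<and> x (fst (snd u) \<alpha>) \<subseteq> Field r"
      using Tx[OF u] dx1 by blast
    have a2: "\<forall>\<beta>\<in>E2 (fst u). finite (y (snd (snd u) \<beta>)) \<and> y (snd (snd u) \<beta>) \<subseteq> Field r"
      using Ty[OF u] dy1 by blast
    show "finite (Z u) \<and> Z u \<subseteq> Field r" unfolding Z_def using f1 a1 a2 by auto
  qed
  have Znon: "\<And>u. u \<in> Tup \<Longrightarrow> Z u \<noteq> {}"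
  proof -
    fix u assume u: "u \<in> Tup"
    have fP: "fst u \<in> P" using u unfolding Tup_def by blast
    from F3[OF fP] show "Z u \<noteq> {}"
    proof
      assume "E1 (fst u) \<noteq> {}"
      then obtain \<alpha> where al: "\<alpha> \<in> E1 (fst u)" by blast
      have t: "\<alpha> \<in> Field k" "fst (snd u) \<alpha> \<in> S \<alpha>" using Tx[OF u al] by blast+
      have e: "capA a (x (fst (snd u) \<alpha>)) \<inter> capA b (x (fst (snd u) \<alpha>)) = {}" using XS4 t by blast
      have "x (fst (snd u) \<alpha>) \<noteq> {}"
      proof
        assume "x (fst (snd u) \<alpha>) = {}"
        thus False using e by (simp add: capA_empty)
      qed
      thus "Z u \<noteq> {}" using Zx[OF al] by blast
    next
      assume "E2 (fst u) \<noteq> {}"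
      then obtain \<alpha> where al: "\<alpha> \<in> E2 (fst u)" by blast
      have t: "\<alpha> \<in> Field k" "snd (snd u) \<alpha> \<in> T \<alpha>" using Ty[OF u al] by blast+
      have e: "capA a (y (snd (snd u) \<alpha>)) \<inter> capA b (y (snd (snd u) \<alpha>)) = {}" using YT4 t by blast
      have "y (snd (snd u) \<alpha>) \<noteq> {}"
      proof
        assume "y (snd (snd u) \<alpha>) = {}"
        thus False using e by (simp add: capA_empty)
      qed
      thus "Z u \<noteq> {}" using Zy[OF al] by blast
    qed
  qed
  have Z3: "\<And>u v. u \<in> Tup \<Longrightarrow> v \<in> Tup \<Longrightarrow> capA a (Z u) \<inter> capA b (Z v) = {}"
  proof -
    fix u v assume u: "u \<in> Tup" and v: "v \<in> Tup"
    have uP: "fst u \<in> P" using u unfolding Tup_def by blast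
    have vP: "fst v \<in> P" using v unfolding Tup_def by blast
    have X: "capA a (Z u) \<inter> capA b (Z v) = {}"
      if al: "\<alpha> \<in> E1 (fst u)" and be: "\<beta> \<in> E1 (fst v)"
        and h: "capA a (x (fst (snd u) \<alpha>)) \<inter> capA b (x (fst (snd v) \<beta>)) = {}" for \<alpha> \<beta>
    proof -
      have "capA a (Z u) \<subseteq> capA a (x (fst (snd u) \<alpha>))" by (rule capA_anti[OF Zx[OF al]])
      moreover have "capA b (Z v) \<subseteq> capA b (x (fst (snd v) \<beta>))" by (rule capA_anti[OF Zx[OF be]])
      ultimately show ?thesis using h by blast
    qed
    have Y: "capA a (Z u) \<inter> capA b (Z v) = {}"
      if al: "\<alpha> \<in> E2 (fst u)" and be: "\<beta> \<in> E2 (fst v)"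
        and h: "capA a (y (snd (snd u) \<alpha>)) \<inter> capA b (y (snd (snd v) \<beta>)) = {}" for \<alpha> \<beta>
    proof -
      have "capA a (Z u) \<subseteq> capA a (y (snd (snd u) \<alpha>))" by (rule capA_anti[OF Zy[OF al]])
      moreover have "capA b (Z v) \<subseteq> capA b (y (snd (snd v) \<beta>))" by (rule capA_anti[OF Zy[OF be]])
      ultimately show ?thesis using h by blast
    qed
    show "capA a (Z u) \<inter> capA b (Z v) = {}"
    proof (cases "fst u = fst v")
      case True
      from F3[OF uP] show ?thesis
      proof
        assume "E1 (fst u) \<noteq> {}"
        then obtain \<alpha> where al: "\<alpha> \<in> E1 (fst u)" by blast
        have al2: "\<alpha> \<in> E1 (fst v)" using al True by simp
        have t: "\<alpha> \<in> Field k" "fst (snd u) \<alpha> \<in> S \<alpha>" using Tx[OF u al] by blast+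
        have t2: "fst (snd v) \<alpha> \<in> S \<alpha>" using Tx[OF v al2] by blast
        have "capA a (x (fst (snd u) \<alpha>)) \<inter> capA b (x (fst (snd v) \<alpha>)) = {}" using XS4 t t2 by blast
        thus ?thesis by (rule X[OF al al2])
      next
        assume "E2 (fst u) \<noteq> {}"
        then obtain \<alpha> where al: "\<alpha> \<in> E2 (fst u)" by blast
        have al2: "\<alpha> \<in> E2 (fst v)" using al True by simp
        have t: "\<alpha> \<in> Field k" "snd (snd u) \<alpha> \<in> T \<alpha>" using Ty[OF u al] by blast+
        have t2: "snd (snd v) \<alpha> \<in> T \<alpha>" using Ty[OF v al2] by blast
        have "capA a (y (snd (snd u) \<alpha>)) \<inter> capA b (y (snd (snd v) \<alpha>)) = {}" using YT4 t t2 by blast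
        thus ?thesis by (rule Y[OF al al2])
      qed
    next
      case False
      from F2[OF uP vP False] show ?thesis
      proof
        assume "\<exists>\<alpha>\<in>E1 (fst u). \<exists>\<beta>\<in>E1 (fst v). \<forall>i\<in>S \<alpha>. \<forall>j\<in>S \<beta>. capA a (x i) \<inter> capA b (x j) = {}"
        then obtain \<alpha> \<beta> where ab: "\<alpha> \<in> E1 (fst u)" "\<beta> \<in> E1 (fst v)"
          "\<forall>i\<in>S \<alpha>. \<forall>j\<in>S \<beta>. capA a (x i) \<inter> capA b (x j) = {}" by blast
        have "fst (snd u) \<alpha> \<in> S \<alpha>" "fst (snd v) \<beta> \<in> S \<beta>" using Tx[OF u ab(1)] Tx[OF v ab(2)] by blast+
        hence "capA a (x (fst (snd u) \<alpha>)) \<inter> capA b (x (fst (snd v) \<beta>)) = {}" using ab(3) by blast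
        thus ?thesis by (rule X[OF ab(1,2)])
      next
        assume "\<exists>\<alpha>\<in>E2 (fst u). \<exists>\<beta>\<in>E2 (fst v). \<forall>i\<in>T \<alpha>. \<forall>j\<in>T \<beta>. capA a (y i) \<inter> capA b (y j) = {}"
        then obtain \<alpha> \<beta> where ab: "\<alpha> \<in> E2 (fst u)" "\<beta> \<in> E2 (fst v)"
          "\<forall>i\<in>T \<alpha>. \<forall>j\<in>T \<beta>. capA a (y i) \<inter> capA b (y j) = {}" by blast
        have "snd (snd u) \<alpha> \<in> T \<alpha>" "snd (snd v) \<beta> \<in> T \<beta>" using Ty[OF u ab(1)] Ty[OF v ab(2)] by blast+
        hence "capA a (y (snd (snd u) \<alpha>)) \<inter> capA b (y (snd (snd v) \<beta>)) = {}" using ab(3) by blast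
        thus ?thesis by (rule Y[OF ab(1,2)])
      qed
    qed
  qed
  obtain I where I: "I \<subseteq> Tup" "\<forall>u\<in>I. \<forall>v\<in>I. u \<noteq> v \<longrightarrow> Z u \<inter> Z v = {}"
     "\<forall>w\<in>Tup - I. \<exists>q\<in>I. Z w \<inter> Z q \<noteq> {} \<or> Z q \<inter> Z w \<noteq> {}"
    using max_pairwise[of Tup "\<lambda>u v. Z u \<inter> Z v = {}"] by blast
  have big: "|Field r| \<le>o |I|"
  proof (rule ccontr)
    assume "\<not> |Field r| \<le>o |I|"
    hence "|I| <o |Field r|" by (rule nle_less[OF card_of_Card_order])
    hence Ir: "|I| <o r" using ordLess_ordIso_trans[OF _ card_of_Field_ordIso[OF card_r]] by blast
    define W where "W = (\<Union>u\<in>I. Z u)"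
    have Wsub: "W \<subseteq> Field r" unfolding W_def using Zsub I(1) by blast
    have Wr: "|W| <o r"
    proof (cases "finite I")
      case True
      have "finite W" unfolding W_def using True Zsub I(1) by blast
      thus ?thesis by (rule fin_less[OF card_r inf_r])
    next
      case False
      have "\<forall>u\<in>I. |Z u| \<le>o |I|" using fin_le_inf[OF _ False] Zsub I(1) by blast
      hence "|W| \<le>o |I|" unfolding W_def
        using card_of_UNION_ordLeq_infinite[OF False card_of_mono1[OF subset_refl]] by blast
      thus ?thesis using Ir by (rule ordLeq_ordLess_trans)
    qed
    obtain \<gamma> where \<gamma>: "\<gamma> \<in> Field k" "|W| \<le>o |th \<gamma>|" using th_conv Wsub Wr by blast
    define U where "U = underS k \<gamma>"
    have Uk: "|U| <o k" unfolding U_def by (rule card_of_underS[OF card_k \<gamma>(1)])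
    define B1 where "B1 = {p\<in>P. E1 p \<inter> U \<noteq> {}}"
    define B2 where "B2 = {p\<in>P. E2 p \<inter> U \<noteq> {}}"
    have "|B1| \<le>o |U|"
    proof (rule pick_inj_card[of B1 E1 U])
      show "\<And>p. p \<in> B1 \<Longrightarrow> E1 p \<inter> U \<noteq> {}" unfolding B1_def by blast
      show "\<And>p q. p \<in> B1 \<Longrightarrow> q \<in> B1 \<Longrightarrow> p \<noteq> q \<Longrightarrow> E1 p \<inter> E1 q = {}"
        unfolding B1_def using E1d by blast
    qed
    hence B1k: "|B1| <o k" using Uk by (rule ordLeq_ordLess_trans)
    have "|B2| \<le>o |U|"
    proof (rule pick_inj_card[of B2 E2 U])
      show "\<And>p. p \<in> B2 \<Longrightarrow> E2 p \<inter> U \<noteq> {}" unfolding B2_def by blast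
      show "\<And>p q. p \<in> B2 \<Longrightarrow> q \<in> B2 \<Longrightarrow> p \<noteq> q \<Longrightarrow> E2 p \<inter> E2 q = {}"
        unfolding B2_def using E2d by blast
    qed
    hence B2k: "|B2| <o k" using Uk by (rule ordLeq_ordLess_trans)
    have Bk: "|B1 \<union> B2| <o k" by (rule card_of_Un_ordLess_infinite_Field[OF ik card_k B1k B2k])
    have "\<not> P \<subseteq> B1 \<union> B2"
    proof
      assume "P \<subseteq> B1 \<union> B2"
      hence "|P| \<le>o |B1 \<union> B2|" by (rule card_of_mono1)
      hence "k \<le>o |B1 \<union> B2|" using P(2) ordLeq_transitive by blast
      thus False using Bk not_ordLess_ordLeq by blast
    qed
    then obtain p0 where p0: "p0 \<in> P" "p0 \<notin> B1" "p0 \<notin> B2" by blast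
    have E1U: "E1 p0 \<inter> U = {}" using p0 unfolding B1_def by blast
    have E2U: "E2 p0 \<inter> U = {}" using p0 unfolding B2_def by blast
    have above: "|th \<gamma>| \<le>o |th \<alpha>|" if al: "\<alpha> \<in> Field k" "\<alpha> \<notin> U" for \<alpha>
    proof (cases "\<alpha> = \<gamma>")
      case True
      thus ?thesis using card_of_mono1[OF subset_refl] by simp
    next
      case False
      hence "(\<alpha>, \<gamma>) \<notin> k" using al(2) unfolding U_def underS_def by blast
      hence "(\<gamma>, \<alpha>) \<in> k" using wo_facts(1)[OF card_k] al(1) \<gamma>(1) by blast
      hence "|th \<gamma>| <o |th \<alpha>|" using th_incr \<gamma>(1) al(1) False by blast
      thus ?thesis by (rule ordLess_imp_ordLeq)
    qed
    have WS: "|W| <o |S \<alpha>|" if al: "\<alpha> \<in> E1 p0" for \<alpha>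
    proof -
      have ak: "\<alpha> \<in> Field k" using E1K[OF p0(1)] al by blast
      have "\<alpha> \<notin> U" using E1U al by blast
      hence "|W| \<le>o |th \<alpha>|" using ordLeq_transitive[OF \<gamma>(2) above[OF ak]] by blast
      moreover have "|th \<alpha>| <o |S \<alpha>|" using XS3 ak by blast
      ultimately show ?thesis by (rule ordLeq_ordLess_trans)
    qed
    have WT: "|W| <o |T \<alpha>|" if al: "\<alpha> \<in> E2 p0" for \<alpha>
    proof -
      have ak: "\<alpha> \<in> Field k" using E2K[OF p0(1)] al by blast
      have "\<alpha> \<notin> U" using E2U al by blast
      hence "|W| \<le>o |th \<alpha>|" using ordLeq_transitive[OF \<gamma>(2) above[OF ak]] by blast
      moreover have "|th \<alpha>| <o |T \<alpha>|" using YT3 ak by blast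
      ultimately show ?thesis by (rule ordLeq_ordLess_trans)
    qed
    define Jx where "Jx = {i\<in>Field r. x i \<inter> W \<noteq> {}}"
    define Jy where "Jy = {i\<in>Field r. y i \<inter> W \<noteq> {}}"
    have Jxc: "|Jx| \<le>o |W|"
    proof (rule pick_inj_card[of Jx x W])
      show "\<And>p. p \<in> Jx \<Longrightarrow> x p \<inter> W \<noteq> {}" unfolding Jx_def by blast
      show "\<And>p q. p \<in> Jx \<Longrightarrow> q \<in> Jx \<Longrightarrow> p \<noteq> q \<Longrightarrow> x p \<inter> x q = {}"
        unfolding Jx_def using dx2 by blast
    qed
    have Jyc: "|Jy| \<le>o |W|"
    proof (rule pick_inj_card[of Jy y W])
      show "\<And>p. p \<in> Jy \<Longrightarrow> y p \<inter> W \<noteq> {}" unfolding Jy_def by blast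
      show "\<And>p q. p \<in> Jy \<Longrightarrow> q \<in> Jy \<Longrightarrow> p \<noteq> q \<Longrightarrow> y p \<inter> y q = {}"
        unfolding Jy_def using dy2 by blast
    qed
    have exf: "\<exists>i. i \<in> S \<alpha> \<and> x i \<inter> W = {}" if al: "\<alpha> \<in> E1 p0" for \<alpha>
    proof (rule ccontr)
      assume "\<not> (\<exists>i. i \<in> S \<alpha> \<and> x i \<inter> W = {})"
      moreover have "S \<alpha> \<subseteq> Field r" using XS1 E1K[OF p0(1)] al by blast
      ultimately have "S \<alpha> \<subseteq> Jx" unfolding Jx_def by blast
      hence "|S \<alpha>| \<le>o |W|" using ordLeq_transitive[OF card_of_mono1 Jxc] by blast
      thus False using WS[OF al] not_ordLess_ordLeq by blast
    qed
    have exg: "\<exists>i. i \<in> T \<alpha> \<and> y i \<inter> W = {}" if al: "\<alpha> \<in> E2 p0" for \<alpha>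
    proof (rule ccontr)
      assume "\<not> (\<exists>i. i \<in> T \<alpha> \<and> y i \<inter> W = {})"
      moreover have "T \<alpha> \<subseteq> Field r" using YT1 E2K[OF p0(1)] al by blast
      ultimately have "T \<alpha> \<subseteq> Jy" unfolding Jy_def by blast
      hence "|T \<alpha>| \<le>o |W|" using ordLeq_transitive[OF card_of_mono1 Jyc] by blast
      thus False using WT[OF al] not_ordLess_ordLeq by blast
    qed
    define f0 where "f0 = (\<lambda>\<alpha>. SOME i. i \<in> S \<alpha> \<and> x i \<inter> W = {})"
    define g0 where "g0 = (\<lambda>\<alpha>. SOME i. i \<in> T \<alpha> \<and> y i \<inter> W = {})"
    have f0p: "f0 \<alpha> \<in> S \<alpha> \<and> x (f0 \<alpha>) \<inter> W = {}" if al: "\<alpha> \<in> E1 p0" for \<alpha>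
      unfolding f0_def by (rule someI_ex[OF exf[OF al]])
    have g0p: "g0 \<alpha> \<in> T \<alpha> \<and> y (g0 \<alpha>) \<inter> W = {}" if al: "\<alpha> \<in> E2 p0" for \<alpha>
      unfolding g0_def by (rule someI_ex[OF exg[OF al]])
    define u0 where "u0 = (p0, f0, g0)"
    have u0T: "u0 \<in> Tup" unfolding u0_def Tup_def using p0(1) f0p g0p by simp
    have u0W: "Z u0 \<inter> W = {}" unfolding u0_def Z_def using f0p g0p by auto
    have u0I: "u0 \<notin> I"
    proof
      assume "u0 \<in> I"
      hence "Z u0 \<subseteq> W" unfolding W_def by blast
      thus False using u0W Znon[OF u0T] by blast
    qed
    then obtain q where q: "q \<in> I" "Z u0 \<inter> Z q \<noteq> {} \<or> Z q \<inter> Z u0 \<noteq> {}" using I(3) u0T by blast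
    have "Z q \<subseteq> W" unfolding W_def using q(1) by blast
    thus False using q(2) u0W by blast
  qed
  obtain G where G: "inj_on G (Field r)" "G ` Field r \<subseteq> I"
    using card_of_ordLeq[of "Field r" I] big by blast
  define z where "z = (\<lambda>i. Z (G i))"
  have GT: "\<And>i. i \<in> Field r \<Longrightarrow> G i \<in> Tup" using G(2) I(1) by blast
  have dz: "disj_fin_family (Field r) z"
    unfolding disj_fin_family_def
  proof (intro conjI ballI impI)
    fix i assume i: "i \<in> Field r"
    show "finite (z i)" "z i \<subseteq> Field r" unfolding z_def using Zsub[OF GT[OF i]] by blast+
  next
    fix i j assume i: "i \<in> Field r" and j: "j \<in> Field r" and ij: "i \<noteq> j"
    have "G i \<noteq> G j" using G(1) i j ij unfolding inj_on_def by blast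
    moreover have "G i \<in> I" "G j \<in> I" using G(2) i j by blast+
    ultimately show "z i \<inter> z j = {}" unfolding z_def using I(2) by blast
  qed
  obtain i j where ij: "i \<in> Field r" "j \<in> Field r" "capA a (z i) \<inter> capA b (z j) \<noteq> {}"
    using nice dz unfolding nice_pair_def by blast
  thus False using Z3[OF GT[OF ij(1)] GT[OF ij(2)]] unfolding z_def by blast
qed

theorem lemma1:
  fixes r :: "'a rel" and k :: "'b rel" and th :: "'b \<Rightarrow> 'a set"
    and \<alpha>0 :: 'b and a b :: "'a \<Rightarrow> nat set"
  assumes card_r: "Card_order r" and inf_r: "\<not> finite (Field r)"
    and card_k: "Card_order k"
    and cof: "is_cofinality k r"
    and singular: "(k, r) \<in> ordLess"
    and uncountable_cof: "(natLeq, k) \<in> ordLess"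
    and th_sub: "\<forall>\<alpha>\<in>Field k. th \<alpha> \<subseteq> Field r"
    and th_below: "\<forall>\<alpha>\<in>Field k. (card_of (th \<alpha>), r) \<in> ordLess"
    and th_incr: "\<forall>\<alpha>\<in>Field k. \<forall>\<beta>\<in>Field k. (\<alpha>, \<beta>) \<in> k \<and> \<alpha> \<noteq> \<beta> \<longrightarrow> (card_of (th \<alpha>), card_of (th \<beta>)) \<in> ordLess"
    and th_conv: "\<forall>C. C \<subseteq> Field r \<and> (card_of (C), r) \<in> ordLess \<longrightarrow> (\<exists>\<alpha>\<in>Field k. (card_of (C), card_of (th \<alpha>)) \<in> ordLeq)"
    and \<alpha>0_least: "\<alpha>0 \<in> Field k" "\<forall>\<beta>\<in>Field k. (\<alpha>0, \<beta>) \<in> k"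
    and th0: "(k, card_of (th \<alpha>0)) \<in> ordLess"
    and pair: "theta_pair (Field r) a b"
  shows "nice_pair (Field r) a b \<longleftrightarrow>
    (\<forall>x y S T. disj_fin_family (Field r) x \<and> disj_fin_family (Field r) y \<and>
       X_sequence (Field r) (Field k) th a b x S \<and> X_sequence (Field r) (Field k) th a b y T
       \<longrightarrow> prod_kappa_cc (Field k) (Qposet (Field k) a b x S) (Qposet (Field k) a b y T))"
proof -
  have ik: "\<not> finite (Field k)"
  proof
    assume "finite (Field k)"
    hence "|Field k| <o natLeq" using finite_iff_ordLess_natLeq by blast
    hence "k <o natLeq" using ordIso_ordLess_trans[OF ordIso_symmetric[OF card_of_Field_ordIso[OF card_k]]] by blast
    thus False using not_ordLess_ordLeq ordLess_imp_ordLeq[OF uncountable_cof] by blast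
  qed
  have reg: "regularCard k" by (rule cof_regular[OF card_r inf_r card_k cof th_below th_incr th_conv])
  have st: "stable k" by (rule regularCard_stable[OF card_k ik reg])
  show ?thesis
  proof
    assume nice: "nice_pair (Field r) a b"
    show "\<forall>x y S T. disj_fin_family (Field r) x \<and> disj_fin_family (Field r) y \<and>
       X_sequence (Field r) (Field k) th a b x S \<and> X_sequence (Field r) (Field k) th a b y T
       \<longrightarrow> prod_kappa_cc (Field k) (Qposet (Field k) a b x S) (Qposet (Field k) a b y T)"
    proof (intro allI impI, elim conjE)
      fix x y S T
      assume dx: "disj_fin_family (Field r) x" and dy: "disj_fin_family (Field r) y"
        and XS: "X_sequence (Field r) (Field k) th a b x S" and YT: "X_sequence (Field r) (Field k) th a b y T"
      show "prod_kappa_cc (Field k) (Qposet (Field k) a b x S) (Qposet (Field k) a b y T)"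
        unfolding prod_kappa_cc_def
      proof (intro allI impI)
        fix A assume anti: "prod_antichain (Qposet (Field k) a b x S) (Qposet (Field k) a b y T) A"
        show "|A| <o |Field k|"
          by (rule forward[OF card_r inf_r card_k ik st uncountable_cof th_incr th_conv nice dx dy XS YT anti])
      qed
    qed
  next
    assume rhs: "\<forall>x y S T. disj_fin_family (Field r) x \<and> disj_fin_family (Field r) y \<and>
       X_sequence (Field r) (Field k) th a b x S \<and> X_sequence (Field r) (Field k) th a b y T
       \<longrightarrow> prod_kappa_cc (Field k) (Qposet (Field k) a b x S) (Qposet (Field k) a b y T)"
    show "nice_pair (Field r) a b" by (rule backward[OF card_r inf_r card_k singular th_below rhs])
  qed
qed

end
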